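(* Let $n_0$ be a positive integer and let $X$ be a unital prime Banach algebra over $\mathbb{C}$ containing a nontrivial idempotent element. Let $h:X\to X$ be an odd mapping such that $$\|h(xyx)-h(x)yx-xh(y)x-xyh(x)\|\le\theta(\|x\|^p+\|y\|^q),$$ $$\|h(\mu(x+my))+h(\mu(x-my))-\mu(2h(x)-2m^2h(y)+m^2h(2y))\|\le\theta(\|x\|^p+\|y\|^q)$$ for all $x,y\in X$ and all $\mu\in\mathbb{T}^1_{n_0}$, for some constants $\theta,p,q,m$, where $m$ is a nonzero even integer and $p<1$, $q<1$. Then $h$ is a linear derivation.
   Context: $\mathbb{T}^1_{n_0}:=\{e^{i\theta}: 0\le\theta\le 2\pi/n_0\}$. An algebra $X$ is prime if it is nontrivial and for any $a,b\in X$, $arb=0$ for all $r\in X$ implies $a=0$ or $b=0$. A nontrivial idempotent is an element $e$ with $e^2=e$, $e\neq0$, $e\neq\mathbf{1}$. A linear derivation is a $\mathbb{C}$-linear map $D:X\to X$ with $D(xy)=D(x)y+xD(y)$ for all $x,y\in X$. *)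

theory Defs
  imports "HOL-Analysis.Analysis"
begin

text \<open>Unital Banach algebras over the complex numbers: a real unital Banach algebra
  together with a compatible complex scalar multiplication (the library only provides
  real scalars for abstract normed algebras).\<close>
class complex_banach_algebra_1 = real_normed_algebra_1 + banach +
  fixes scaleC :: "complex \<Rightarrow> 'a \<Rightarrow> 'a"
  assumes scaleC_add_right: "scaleC c (x + y) = scaleC c x + scaleC c y"
    and scaleC_add_left: "scaleC (c + d) x = scaleC c x + scaleC d x"
    and scaleC_scaleC: "scaleC c (scaleC d x) = scaleC (c * d) x"
    and scaleC_one: "scaleC 1 x = x"
    and scaleC_of_real: "scaleC (complex_of_real r) x = scaleR r x"
    and norm_scaleC: "norm (scaleC c x) = cmod c * norm x"
    and mult_scaleC_left: "scaleC c x * y = scaleC c (x * y)"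
    and mult_scaleC_right: "x * scaleC c y = scaleC c (x * y)"

definition prime_algebra :: "'a::ring_1 itself \<Rightarrow> bool" where
  "prime_algebra _ \<longleftrightarrow> (1::'a) \<noteq> 0 \<and>
     (\<forall>a b::'a. (\<forall>r. a * r * b = 0) \<longrightarrow> a = 0 \<or> b = 0)"

definition nontrivial_idempotent :: "'a::ring_1 \<Rightarrow> bool" where
  "nontrivial_idempotent e \<longleftrightarrow> e * e = e \<and> e \<noteq> 0 \<and> e \<noteq> 1"

definition circle_arc :: "nat \<Rightarrow> complex set" where
  "circle_arc n0 = {exp (\<i> * complex_of_real t) | t. 0 \<le> t \<and> t \<le> 2 * pi / real n0}"

definition linear_derivation :: "('a::complex_banach_algebra_1 \<Rightarrow> 'a) \<Rightarrow> bool" where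
  "linear_derivation D \<longleftrightarrow>
     (\<forall>x y. D (x + y) = D x + D y) \<and>
     (\<forall>c x. D (scaleC c x) = scaleC c (D x)) \<and>
     (\<forall>x y. D (x * y) = D x * y + x * D y)"

end

theory Submission
  imports Defs
begin


lemma two_torsion: "(x::'a::real_vector) + x = 0 \<Longrightarrow> x = 0"
  by (metis scaleR_2 scaleR_eq_0_iff zero_neq_numeral)

lemma prime_L1:
  fixes d c :: "'a::real_algebra_1"
  assumes prime: "\<And>a b::'a. (\<And>r. a * r * b = 0) \<Longrightarrow> a = 0 \<or> b = 0"
    and H: "\<And>r. d * r * c + c * r * d = 0"
  shows "d * r * c = 0" "c * r * d = 0"
proof -
  have A: "d * x * c * z * c = 0" for x z
  proof -
    have 1: "d * (x*c*z) * c + c * (x*c*z) * d = 0" by (rule H)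
    have 2: "c * z * d = - (d * z * c)" using H[of z] by (metis add.commute add_eq_0_iff2)
    have 3: "c * x * d = - (d * x * c)" using H[of x] by (metis add.commute add_eq_0_iff2)
    have "c * (x*c*z) * d = c * x * (c * z * d)" by (simp add: mult.assoc)
    also have "\<dots> = - (c * x * d * z * c)" using 2 by (simp add: mult.assoc)
    also have "\<dots> = d * x * c * z * c" using 3 by simp
    finally have "d * x * c * z * c + d * x * c * z * c = 0" using 1 by (simp add: mult.assoc)
    then show ?thesis by (rule two_torsion)
  qed
  have "d * r * c = 0 \<or> c = 0" using prime[of "d*r*c" c] A by blast
  then show "d * r * c = 0" by auto
  then show "c * r * d = 0" using H[of r] by simp
qed

lemma herstein:
  fixes D :: "'a::real_algebra_1 \<Rightarrow> 'a"
  assumes prime: "\<And>a b::'a. (\<And>r. a * r * b = 0) \<Longrightarrow> a = 0 \<or> b = 0"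
    and add: "\<And>x y. D (x + y) = D x + D y"
    and tri: "\<And>x y. D (x * y * x) = D x * y * x + x * D y * x + x * y * D x"
  shows "D (x * y) = D x * y + x * D y"
proof -
  have D0: "D 0 = 0" using add[of 0 0] by simp
  have Dneg: "D (- x) = - D x" for x using add[of x "-x"] D0 by (metis add.commute add_eq_0_iff2)
  have Ddiff: "D (x - y) = D x - D y" for x y using add[of x "-y"] Dneg[of y] by simp
  have D1: "D 1 = 0"
  proof -
    have "D 1 + D 1 = 0" using tri[of 1 1] by simp
    then show ?thesis by (rule two_torsion)
  qed
  have T: "D (a*b*c + c*b*a) = D a*b*c + a*D b*c + a*b*D c + D c*b*a + c*D b*a + c*b*D a" for a b c
  proof -
    have "(a+c)*b*(a+c) = a*b*a + c*b*c + (a*b*c + c*b*a)" by (simp add: algebra_simps)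
    then have "D ((a+c)*b*(a+c)) = D (a*b*a) + D (c*b*c) + D (a*b*c + c*b*a)" by (simp only: add)
    then show ?thesis using tri[of "a+c" b] tri[of a b] tri[of c b]
      by (simp add: algebra_simps add)
  qed
  have J: "D (a*b + b*a) = D a*b + a*D b + D b*a + b*D a" for a b
    using T[of a b 1] D1 by simp
  define \<delta> where "\<delta> = (\<lambda>a b. D (a*b) - D a*b - a*D b)"
  have anti: "\<delta> b a = - \<delta> a b" for a b
    using J[of a b] add[of "a*b" "b*a"] unfolding \<delta>_def by (simp add: algebra_simps)
  have K: "\<delta> a b * r * (b*a - a*b) + (b*a - a*b) * r * \<delta> a b = 0" for a b r
  proof -
    have e1: "D (a*b*r*(b*a) + b*a*r*(a*b)) = D (a*b)*r*(b*a) + a*b*D r*(b*a) + a*b*r*D (b*a)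
       + D (b*a)*r*(a*b) + b*a*D r*(a*b) + b*a*r*D (a*b)" using T[of "a*b" r "b*a"] by simp
    have e2: "D (a*b*r*(b*a) + b*a*r*(a*b)) = D (a*(b*r*b)*a) + D (b*(a*r*a)*b)"
      by (simp only: add mult.assoc)
    have e3: "D (a*(b*r*b)*a) = D a*(b*r*b)*a + a*(D b*r*b + b*D r*b + b*r*D b)*a + a*(b*r*b)*D a"
      using tri[of a "b*r*b"] tri[of b r] by simp
    have e4: "D (b*(a*r*a)*b) = D b*(a*r*a)*b + b*(D a*r*a + a*D r*a + a*r*D a)*b + b*(a*r*a)*D b"
      using tri[of b "a*r*a"] tri[of a r] by simp
    have "\<delta> a b * r * (b*a) + a*b*r*\<delta> b a + \<delta> b a * r * (a*b) + b*a*r*\<delta> a b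
      = (D (a*b)*r*(b*a) + a*b*D r*(b*a) + a*b*r*D (b*a)
       + D (b*a)*r*(a*b) + b*a*D r*(a*b) + b*a*r*D (a*b))
      - ((D a*(b*r*b)*a + a*(D b*r*b + b*D r*b + b*r*D b)*a + a*(b*r*b)*D a) +
         (D b*(a*r*a)*b + b*(D a*r*a + a*D r*a + a*r*D a)*b + b*(a*r*a)*D b))"
      unfolding \<delta>_def by (simp add: algebra_simps)
    also have "\<dots> = 0" using e1 e2 e3 e4 by simp
    finally show ?thesis using anti[of a b] by (simp add: algebra_simps)
  qed
  have S1: "\<delta> a b * r * (b*a - a*b) = 0" "(b*a - a*b) * r * \<delta> a b = 0" for a b r
    using prime_L1[OF prime K] by auto
  have dadd1: "\<delta> (a+c) b = \<delta> a b + \<delta> c b" for a b c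
    unfolding \<delta>_def by (simp add: algebra_simps add)
  have dadd2: "\<delta> a (b+c) = \<delta> a b + \<delta> a c" for a b c
    unfolding \<delta>_def by (simp add: algebra_simps add)
  have S2: "\<delta> a b * r * (b*c - c*b) = 0" for a b c r
  proof -
    have lin: "\<delta> a b * r * (b*c - c*b) + \<delta> c b * r * (b*a - a*b) = 0" for r
      using S1(1)[of "a+c" b r] S1(1)[of a b r] S1(1)[of c b r] dadd1[of a c b]
      by (simp add: algebra_simps)
    let ?u = "\<delta> a b * r * (b*c - c*b)"
    have "?u * s * ?u = 0" for s
    proof -
      have eq: "?u = - (\<delta> c b * r * (b*a - a*b))" using lin[of r] by (metis add_eq_0_iff2)
      have "?u * s * ?u = ?u * s * (- (\<delta> c b * r * (b*a - a*b)))" by (simp only: eq[symmetric])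
      also have "\<dots> = - (\<delta> a b * (r * (b*c - c*b) * s * \<delta> c b * r) * (b*a - a*b))"
        by (simp add: mult.assoc)
      finally have "?u * s * ?u = - (\<delta> a b * (r * (b*c - c*b) * s * \<delta> c b * r) * (b*a - a*b))" .
      also have "\<dots> = 0" using S1(1) by simp
      finally show ?thesis .
    qed
    then show ?thesis using prime[of ?u ?u] by auto
  qed
  have S3: "\<delta> a b * r * (e*c - c*e) = 0" for a b c e r
  proof -
    have lin: "\<delta> a b * r * (e*c - c*e) + \<delta> a e * r * (b*c - c*b) = 0" for r
      using S2[of a "b+e" r c] S2[of a b r c] S2[of a e r c] dadd2[of a b e]
      by (simp add: algebra_simps)
    let ?u = "\<delta> a b * r * (e*c - c*e)"
    have "?u * s * ?u = 0" for s
    proof -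
      have eq: "?u = - (\<delta> a e * r * (b*c - c*b))" using lin[of r] by (metis add_eq_0_iff2)
      have "?u * s * ?u = ?u * s * (- (\<delta> a e * r * (b*c - c*b)))" by (simp only: eq[symmetric])
      also have "\<dots> = - (\<delta> a b * (r * (e*c - c*e) * s * \<delta> a e * r) * (b*c - c*b))"
        by (simp add: mult.assoc)
      finally have "?u * s * ?u = - (\<delta> a b * (r * (e*c - c*e) * s * \<delta> a e * r) * (b*c - c*b))" .
      also have "\<dots> = 0" using S2 by simp
      finally show ?thesis .
    qed
    then show ?thesis using prime[of ?u ?u] by auto
  qed
  have "\<delta> x y = 0"
  proof (rule ccontr)
    assume ne: "\<delta> x y \<noteq> 0"
    have comm: "e * c = c * e" for e c :: 'a
      using prime[of "\<delta> x y" "e*c - c*e"] S3[of x y _ e c] ne by auto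
    have "D (x*y) + D (x*y) = (D x * y + x * D y) + (D x * y + x * D y)"
      using J[of x y] add[of "x*y" "y*x"] comm[of x y] comm[of "D y" x] comm[of y "D x"]
      by (simp add: algebra_simps)
    then have "D (x*y) - (D x * y + x * D y) + (D (x*y) - (D x * y + x * D y)) = 0"
      by (simp add: algebra_simps)
    then have "D (x*y) - (D x * y + x * D y) = 0" by (rule two_torsion)
    then show False using ne unfolding \<delta>_def by (simp add: algebra_simps)
  qed
  then show ?thesis unfolding \<delta>_def by (simp add: algebra_simps)
qed



lemma pw: "((2::real)^n) powr c / (2^n)^k = (2 powr (c - real k))^n"
proof -
  have a: "(2::real)^n = 2 powr real n" by (simp add: powr_realpow)
  have b: "((2::real)^n)^k = 2 powr (real n * real k)"
  proof -
    have "((2::real)^n)^k = 2^(n*k)" by (simp add: power_mult)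
    also have "\<dots> = 2 powr real (n*k)" by (rule powr_realpow[symmetric]) simp
    finally show ?thesis by (simp only: of_nat_mult)
  qed
  have c: "(2 powr (c - real k))^n = (2::real) powr ((c - real k) * real n)"
  proof -
    have "(2 powr (c - real k))^n = ((2::real) powr (c - real k)) powr real n"
      by (simp add: powr_realpow)
    also have "\<dots> = 2 powr ((c - real k) * real n)" by (simp add: powr_powr)
    finally show ?thesis .
  qed
  show ?thesis unfolding b c unfolding a
    by (simp add: powr_powr powr_diff[symmetric] algebra_simps)
qed

lemma pw_lim: "c < 0 \<Longrightarrow> (\<lambda>n. ((2::real) powr c)^n) \<longlonglongrightarrow> 0"
  by (rule LIMSEQ_power_zero) (simp add: powr_less_one)

lemma lim_zero_bound:
  fixes X :: "nat \<Rightarrow> 'a::real_normed_vector"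
  assumes "X \<longlonglongrightarrow> L" "\<And>n. norm (X n) \<le> B n" "B \<longlonglongrightarrow> 0"
  shows "L = 0"
proof -
  have "X \<longlonglongrightarrow> 0" by (rule Lim_null_comparison[OF _ assms(3)]) (use assms(2) in auto)
  then show ?thesis using assms(1) LIMSEQ_unique by blast
qed

lemma vanish:
  fixes a :: "'a::real_normed_vector"
  assumes "\<And>n. (2::real)^n * norm a \<le> \<theta> * (((2::real)^n) powr p * A + ((2::real)^n) powr q * B)"
    and "p < 1" "q < 1"
  shows "a = 0"
proof -
  have "norm a \<le> \<theta> * ((2 powr (p - 1))^n * A + (2 powr (q - 1))^n * B)" for n
  proof -
    have "norm a = (2^n * norm a) / 2^n" by simp
    also have "\<dots> \<le> \<theta> * (((2::real)^n) powr p * A + ((2::real)^n) powr q * B) / 2^n"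
      by (rule divide_right_mono[OF assms(1)]) simp
    also have "\<dots> = \<theta> * ((((2::real)^n) powr p / (2^n)^1) * A + (((2::real)^n) powr q / (2^n)^1) * B)"
      by (simp add: field_simps)
    also have "\<dots> = \<theta> * ((2 powr (p - 1))^n * A + (2 powr (q - 1))^n * B)"
      unfolding pw by simp
    finally show ?thesis .
  qed
  moreover have "(\<lambda>n. \<theta> * ((2 powr (p - 1))^n * A + (2 powr (q - 1))^n * B)) \<longlonglongrightarrow> 0"
  proof -
    have "(\<lambda>n. \<theta> * ((2 powr (p - 1))^n * A + (2 powr (q - 1))^n * B)) \<longlonglongrightarrow> \<theta> * (0 * A + 0 * B)"
      by (intro tendsto_intros pw_lim) (use assms in auto)
    then show ?thesis by simp
  qed
  ultimately show ?thesis by (rule lim_zero_bound[OF tendsto_const])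
qed

lemma scaleC_scaleR_comm:
  fixes x :: "'a::complex_banach_algebra_1"
  shows "scaleC c (r *\<^sub>R x) = r *\<^sub>R scaleC c x"
proof -
  have "scaleC c (r *\<^sub>R x) = scaleC c (scaleC (complex_of_real r) x)" by (simp add: scaleC_of_real)
  also have "\<dots> = scaleC (complex_of_real r) (scaleC c x)" by (simp add: scaleC_scaleC mult.commute)
  finally show ?thesis by (simp add: scaleC_of_real)
qed

lemma scaleC_zero_right: "scaleC c (0::'a::complex_banach_algebra_1) = 0"
proof -
  have "scaleC c (0::'a) = scaleC c 0 + scaleC c 0" by (metis add_0 scaleC_add_right)
  then show ?thesis by simp
qed

lemma scaleC_minus_right: "scaleC c (- x::'a::complex_banach_algebra_1) = - scaleC c x"
  by (metis add_eq_0_iff2 scaleC_add_right scaleC_zero_right add.commute neg_eq_iff_add_eq_0)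

lemma scaleC_diff_right: "scaleC c (x - y::'a::complex_banach_algebra_1) = scaleC c x - scaleC c y"
  by (simp add: scaleC_add_right scaleC_minus_right diff_conv_add_uminus del: add_uminus_conv_diff)

lemma cis_plus_minus: "cis a + cis (- a) = complex_of_real (2 * cos a)"
  by (simp add: complex_eq_iff)



theorem corollary3p4:
  fixes n0 :: nat and h :: "'a::complex_banach_algebra_1 \<Rightarrow> 'a"
    and \<theta> p q :: real and m :: int
  assumes "n0 > 0"
    and "prime_algebra TYPE('a)"
    and "\<exists>e::'a. nontrivial_idempotent e"
    and "\<And>x. h (- x) = - h x"
    and "m \<noteq> 0" and "even m" and "p < 1" and "q < 1"
    and "\<And>x y. norm (h (x * y * x) - h x * y * x - x * h y * x - x * y * h x)
                 \<le> \<theta> * (norm x powr p + norm y powr q)"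
    and "\<And>x y \<mu>. \<mu> \<in> circle_arc n0 \<Longrightarrow>
           norm (h (scaleC \<mu> (x + of_int m *\<^sub>R y)) + h (scaleC \<mu> (x - of_int m *\<^sub>R y))
                 - scaleC \<mu> (2 *\<^sub>R h x - (2 * of_int m ^ 2) *\<^sub>R h y
                               + (of_int m ^ 2) *\<^sub>R h (2 *\<^sub>R y)))
           \<le> \<theta> * (norm x powr p + norm y powr q)"
  shows "linear_derivation h"
proof -
  note A1 = assms(9) and A2 = assms(10) and odd = assms(4)
  have prime: "\<And>a b::'a. (\<And>r. a*r*b = 0) \<Longrightarrow> a = 0 \<or> b = 0"
    using assms(2) unfolding prime_algebra_def by blast
  have one_arc: "1 \<in> circle_arc n0" unfolding circle_arc_def
    by (rule CollectI, rule exI[of _ 0]) auto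
  have h0: "h 0 = 0"
  proof -
    have "h 0 + h 0 = 0" using odd[of 0] by (metis add_eq_0_iff2 minus_zero)
    then show ?thesis by (rule two_torsion)
  qed
  have m2: "1 \<le> (real_of_int m)^2"
  proof -
    have "(1::int) \<le> m^2" using assms(5)
      by (metis abs_ge_self abs_le_square_iff dual_order.trans linorder_not_less one_le_power zero_less_abs_iff power2_eq_square zero_le_power2 int_one_le_iff_zero_less abs_square_le_1)
    then have "real_of_int 1 \<le> real_of_int (m^2)" by (simp only: of_int_le_iff)
    then show ?thesis by simp
  qed
  have h2: "norm (h (2 *\<^sub>R y) - 2 *\<^sub>R h y) \<le> \<theta> * norm y powr q" for y
  proof -
    have "norm (h (scaleC 1 (0 + of_int m *\<^sub>R y)) + h (scaleC 1 (0 - of_int m *\<^sub>R y))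
                 - scaleC 1 (2 *\<^sub>R h 0 - (2 * of_int m ^ 2) *\<^sub>R h y
                               + (of_int m ^ 2) *\<^sub>R h (2 *\<^sub>R y)))
           \<le> \<theta> * (norm (0::'a) powr p + norm y powr q)" by (rule A2[OF one_arc])
    then have "norm (- ((real_of_int m ^ 2) *\<^sub>R (h (2 *\<^sub>R y) - 2 *\<^sub>R h y))) \<le> \<theta> * norm y powr q"
      by (simp add: scaleC_one h0 odd algebra_simps)
    then have "(real_of_int m)^2 * norm (h (2 *\<^sub>R y) - 2 *\<^sub>R h y) \<le> \<theta> * norm y powr q"
      by (simp only: norm_minus_cancel norm_scaleR abs_power2)
    moreover have "norm (h (2 *\<^sub>R y) - 2 *\<^sub>R h y) \<le> (real_of_int m)^2 * norm (h (2 *\<^sub>R y) - 2 *\<^sub>R h y)"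
      using m2 by (simp add: mult_le_cancel_right1)
    ultimately show ?thesis by linarith
  qed
  define g where "g = (\<lambda>n::nat. \<lambda>z. (1/2^n) *\<^sub>R h (((2::real)^n) *\<^sub>R z))"
  have gstep: "norm (g (Suc n) z - g n z) \<le> \<theta>/2 * norm z powr q * (2 powr (q - 1))^n" for n z
  proof -
    have "g (Suc n) z - g n z = (1/2^(Suc n)) *\<^sub>R (h (2 *\<^sub>R ((2^n) *\<^sub>R z)) - 2 *\<^sub>R h ((2^n) *\<^sub>R z))"
      unfolding g_def by (simp add: algebra_simps)
    then have "norm (g (Suc n) z - g n z) = norm (h (2 *\<^sub>R ((2^n) *\<^sub>R z)) - 2 *\<^sub>R h ((2^n) *\<^sub>R z)) / 2^(Suc n)"
      by simp
    also have "\<dots> \<le> \<theta> * norm (((2::real)^n) *\<^sub>R z) powr q / 2^(Suc n)"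
      by (rule divide_right_mono[OF h2]) simp
    also have "\<dots> = \<theta>/2 * norm z powr q * (((2::real)^n) powr q / (2^n)^1)"
      by (simp add: powr_mult)
    also have "\<dots> = \<theta>/2 * norm z powr q * (2 powr (q - 1))^n" unfolding pw by simp
    finally show ?thesis .
  qed
  have gD: "(\<lambda>n. g n z) \<longlonglongrightarrow> lim (\<lambda>n. g n z)" for z
  proof -
    have "summable (\<lambda>n. g (Suc n) z - g n z)"
    proof (rule summable_comparison_test'[OF _ gstep])
      show "summable (\<lambda>n. \<theta>/2 * norm z powr q * (2 powr (q - 1))^n)"
        by (rule summable_mult, rule summable_geometric) (use assms(8) in \<open>simp add: powr_less_one\<close>)
    qed
    then have "(\<lambda>n. (\<Sum>i<n. g (Suc i) z - g i z)) \<longlonglongrightarrow> suminf (\<lambda>n. g (Suc n) z - g n z)"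
      by (rule summable_LIMSEQ)
    then have "(\<lambda>n. g n z - g 0 z) \<longlonglongrightarrow> suminf (\<lambda>n. g (Suc n) z - g n z)"
      using sum_lessThan_telescope[of "\<lambda>i. g i z"] by simp
    then have "(\<lambda>n. (g n z - g 0 z) + g 0 z) \<longlonglongrightarrow> suminf (\<lambda>n. g (Suc n) z - g n z) + g 0 z"
      by (intro tendsto_intros)
    then have "convergent (\<lambda>n. g n z)" unfolding convergent_def by auto
    then show ?thesis by (simp add: convergent_LIMSEQ_iff)
  qed
  define D where "D z = lim (\<lambda>n. g n z)" for z
  have gD: "(\<lambda>n. g n z) \<longlonglongrightarrow> D z" for z using gD unfolding D_def .
  have gsub: "(\<lambda>n. g (n*k) z) \<longlonglongrightarrow> D z" if "k > 0" for k z
  proof -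
    have "strict_mono (\<lambda>n::nat. n*k)" using that by (simp add: strict_mono_def)
    from LIMSEQ_subseq_LIMSEQ[OF gD this] show ?thesis by (simp add: o_def)
  qed
  define P where "P x y = h (x*y*x) - h x*y*x - x*h y*x - x*y*h x" for x y
  have Pb: "norm (P a b) \<le> \<theta> * (norm a powr p + norm b powr q)" for a b
    unfolding P_def by (rule A1)
  have npw: "norm (((2::real)^n) *\<^sub>R x) powr c = ((2::real)^n) powr c * norm x powr c" for n x c
    by (simp add: powr_mult)
  have triD: "D (x*y*x) = D x*y*x + x*D y*x + x*y*D x" for x y
  proof -
    let ?X = "\<lambda>n. g (n*3) (x*y*x) - g n x * y * x - x * g n y * x - x*y*g n x"
    have lim: "?X \<longlonglongrightarrow> D (x*y*x) - D x*y*x - x*D y*x - x*y*D x"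
      by (intro tendsto_intros gsub gD) simp
    have eqX: "?X n = (1/((2::real)^n)^3) *\<^sub>R P (((2::real)^n) *\<^sub>R x) (((2::real)^n) *\<^sub>R y)" for n
    proof -
      have e3: "(2::real)^(n*3) = (2^n)^3" by (simp add: power_mult)
      show ?thesis unfolding g_def P_def e3
        by (simp add: algebra_simps power3_eq_cube)
    qed
    have bnd: "norm (?X n) \<le> \<theta> * ((2 powr (p - 3))^n * norm x powr p + (2 powr (q - 3))^n * norm y powr q)" for n
    proof -
      have "norm (?X n) = norm (P (((2::real)^n) *\<^sub>R x) (((2::real)^n) *\<^sub>R y)) / ((2::real)^n)^3"
        unfolding eqX by simp
      also have "\<dots> \<le> \<theta> * (norm (((2::real)^n) *\<^sub>R x) powr p + norm (((2::real)^n) *\<^sub>R y) powr q) / ((2::real)^n)^3"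
        by (rule divide_right_mono[OF Pb]) simp
      also have "\<dots> = \<theta> * ((((2::real)^n) powr p / (2^n)^3) * norm x powr p + (((2::real)^n) powr q / (2^n)^3) * norm y powr q)"
        unfolding npw by (simp add: field_simps)
      also have "\<dots> = \<theta> * ((2 powr (p - 3))^n * norm x powr p + (2 powr (q - 3))^n * norm y powr q)"
        unfolding pw by simp
      finally show ?thesis .
    qed
    have "(\<lambda>n. \<theta> * ((2 powr (p - 3))^n * norm x powr p + (2 powr (q - 3))^n * norm y powr q)) \<longlonglongrightarrow> \<theta> * (0 * norm x powr p + 0 * norm y powr q)"
      by (intro tendsto_intros pw_lim) (use assms(7,8) in auto)
    then have "D (x*y*x) - D x*y*x - x*D y*x - x*y*D x = 0"
      using lim_zero_bound[OF lim bnd] by simp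
    then show ?thesis by (simp add: algebra_simps)
  qed
  have triD2: "D (x*y*x) = D x*y*x + x*h y*x + x*y*D x" for x y
  proof -
    let ?X = "\<lambda>n. g (n*2) (x*y*x) - g n x * y * x - x * h y * x - x*y*g n x"
    have lim: "?X \<longlonglongrightarrow> D (x*y*x) - D x*y*x - x*h y*x - x*y*D x"
      by (intro tendsto_intros gsub gD) simp
    have eqX: "?X n = (1/((2::real)^n)^2) *\<^sub>R P (((2::real)^n) *\<^sub>R x) y" for n
    proof -
      have e3: "(2::real)^(n*2) = (2^n)^2" by (simp add: power_mult)
      show ?thesis unfolding g_def P_def e3
        by (simp add: algebra_simps power2_eq_square)
    qed
    have bnd: "norm (?X n) \<le> \<theta> * ((2 powr (p - 2))^n * norm x powr p + (2 powr (0 - 2))^n * norm y powr q)" for n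
    proof -
      have "norm (?X n) = norm (P (((2::real)^n) *\<^sub>R x) y) / ((2::real)^n)^2"
        unfolding eqX by simp
      also have "\<dots> \<le> \<theta> * (norm (((2::real)^n) *\<^sub>R x) powr p + norm y powr q) / ((2::real)^n)^2"
        by (rule divide_right_mono[OF Pb]) simp
      also have "\<dots> = \<theta> * ((((2::real)^n) powr p / (2^n)^2) * norm x powr p + (((2::real)^n) powr 0 / (2^n)^2) * norm y powr q)"
        unfolding npw by (simp add: field_simps)
      also have "\<dots> = \<theta> * ((2 powr (p - 2))^n * norm x powr p + (2 powr (0 - 2))^n * norm y powr q)"
        unfolding pw by simp
      finally show ?thesis .
    qed
    have "(\<lambda>n. \<theta> * ((2 powr (p - 2))^n * norm x powr p + (2 powr (0 - 2))^n * norm y powr q)) \<longlonglongrightarrow> \<theta> * (0 * norm x powr p + 0 * norm y powr q)"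
      by (intro tendsto_intros pw_lim) (use assms(7,8) in auto)
    then have "D (x*y*x) - D x*y*x - x*h y*x - x*y*D x = 0"
      using lim_zero_bound[OF lim bnd] by simp
    then show ?thesis by (simp add: algebra_simps)
  qed
  have hD: "h y = D y" for y using triD[of 1 y] triD2[of 1 y] by simp
  have Dh: "D = h" by (rule ext) (simp add: hD)
  have h2x: "h (2 *\<^sub>R y) = 2 *\<^sub>R h y" for y
  proof -
    have eq: "g n (2 *\<^sub>R y) = 2 *\<^sub>R g (Suc n) y" for n
      unfolding g_def by (simp add: scaleR_scaleR mult.commute)
    have "(\<lambda>n. 2 *\<^sub>R g (Suc n) y) \<longlonglongrightarrow> 2 *\<^sub>R D y"
      by (intro tendsto_intros LIMSEQ_Suc gD)
    then have "(\<lambda>n. g n (2 *\<^sub>R y)) \<longlonglongrightarrow> 2 *\<^sub>R D y" by (simp only: eq)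
    then have "D (2 *\<^sub>R y) = 2 *\<^sub>R D y" using gD LIMSEQ_unique by blast
    then show ?thesis by (simp add: Dh)
  qed
  have hpow: "h (((2::real)^n) *\<^sub>R z) = ((2::real)^n) *\<^sub>R h z" for n z
  proof (induction n)
    case 0 then show ?case by simp
  next
    case (Suc n)
    have "h (((2::real)^Suc n) *\<^sub>R z) = h (2 *\<^sub>R (((2::real)^n) *\<^sub>R z))" by simp
    also have "\<dots> = ((2::real)^Suc n) *\<^sub>R h z" by (simp only: h2x Suc) simp
    finally show ?case .
  qed
  have mid: "h (x + of_int m *\<^sub>R y) + h (x - of_int m *\<^sub>R y) = 2 *\<^sub>R h x" for x y
  proof -
    let ?a = "h (x + of_int m *\<^sub>R y) + h (x - of_int m *\<^sub>R y) - 2 *\<^sub>R h x"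
    have "?a = 0"
    proof (rule vanish[OF _ assms(7,8)])
      fix n
      let ?s = "(2::real)^n"
      have e1: "?s *\<^sub>R x + of_int m *\<^sub>R (?s *\<^sub>R y) = ?s *\<^sub>R (x + of_int m *\<^sub>R y)"
        by (simp add: algebra_simps)
      have e2: "?s *\<^sub>R x - of_int m *\<^sub>R (?s *\<^sub>R y) = ?s *\<^sub>R (x - of_int m *\<^sub>R y)"
        by (simp add: algebra_simps)
      have "h (scaleC 1 (?s *\<^sub>R x + of_int m *\<^sub>R (?s *\<^sub>R y))) + h (scaleC 1 (?s *\<^sub>R x - of_int m *\<^sub>R (?s *\<^sub>R y)))
                 - scaleC 1 (2 *\<^sub>R h (?s *\<^sub>R x) - (2 * of_int m ^ 2) *\<^sub>R h (?s *\<^sub>R y)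
                               + (of_int m ^ 2) *\<^sub>R h (2 *\<^sub>R (?s *\<^sub>R y)))
            = ?s *\<^sub>R (h (x + of_int m *\<^sub>R y) + h (x - of_int m *\<^sub>R y) - 2 *\<^sub>R h x
                 - (2 * of_int m ^ 2) *\<^sub>R h y + (of_int m ^ 2) *\<^sub>R (2 *\<^sub>R h y))"
        by (simp only: scaleC_one e1 e2 h2x hpow) (simp add: algebra_simps)
      also have "\<dots> = ?s *\<^sub>R ?a" by (simp add: algebra_simps)
      finally have eq: "h (scaleC 1 (?s *\<^sub>R x + of_int m *\<^sub>R (?s *\<^sub>R y))) + h (scaleC 1 (?s *\<^sub>R x - of_int m *\<^sub>R (?s *\<^sub>R y)))
                 - scaleC 1 (2 *\<^sub>R h (?s *\<^sub>R x) - (2 * of_int m ^ 2) *\<^sub>R h (?s *\<^sub>R y)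
                               + (of_int m ^ 2) *\<^sub>R h (2 *\<^sub>R (?s *\<^sub>R y))) = ?s *\<^sub>R ?a" .
      have "norm (?s *\<^sub>R ?a) \<le> \<theta> * (norm (?s *\<^sub>R x) powr p + norm (?s *\<^sub>R y) powr q)"
        unfolding eq[symmetric] by (rule A2[OF one_arc])
      then show "?s * norm ?a \<le> \<theta> * (?s powr p * norm x powr p + ?s powr q * norm y powr q)"
        unfolding npw by simp
    qed
    then show ?thesis by simp
  qed
  have hadd: "h (u + v) = h u + h v" for u v
  proof -
    have mz: "real_of_int m \<noteq> 0" using assms(5) by simp
    have c: "of_int m *\<^sub>R ((1 / (2 * real_of_int m)) *\<^sub>R (u - v)) = (1/2) *\<^sub>R (u - v)"
      using mz by simp
    have half: "(1/2) *\<^sub>R w + (1/2) *\<^sub>R w = w" for w :: 'a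
      by (simp flip: scaleR_add_left)
    have e1: "(1/2) *\<^sub>R (u + v) + of_int m *\<^sub>R ((1 / (2 * real_of_int m)) *\<^sub>R (u - v)) = u"
      unfolding c by (simp add: algebra_simps half)
    have e2: "(1/2) *\<^sub>R (u + v) - of_int m *\<^sub>R ((1 / (2 * real_of_int m)) *\<^sub>R (u - v)) = v"
      unfolding c by (simp add: algebra_simps half)
    have "h u + h v = 2 *\<^sub>R h ((1/2) *\<^sub>R (u + v))"
      using mid[of "(1/2) *\<^sub>R (u + v)" "(1 / (2 * real_of_int m)) *\<^sub>R (u - v)"] unfolding e1 e2 .
    also have "\<dots> = h (u + v)" using h2x[of "(1/2) *\<^sub>R (u + v)"] by simp
    finally show ?thesis by simp
  qed
  have hmul: "h (x * y) = h x * y + x * h y" for x y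
  proof -
    have triH: "h (x*y*x) = h x*y*x + x*h y*x + x*y*h x" for x y using triD[of x y] unfolding Dh .
    show ?thesis by (rule herstein[OF prime hadd triH])
  qed
  have hnat: "h (of_nat k *\<^sub>R z) = of_nat k *\<^sub>R h z" for k z
  proof (induction k)
    case 0 then show ?case by (simp add: h0)
  next
    case (Suc k)
    have "h (of_nat (Suc k) *\<^sub>R z) = h (z + of_nat k *\<^sub>R z)" by (simp add: algebra_simps)
    also have "\<dots> = of_nat (Suc k) *\<^sub>R h z" using Suc by (simp add: hadd algebra_simps)
    finally show ?case .
  qed
  have dbl: "(a::real) *\<^sub>R w + a *\<^sub>R w = (2*a) *\<^sub>R w" for a and w :: 'a
    by (metis scaleR_add_left mult_2)
  have harc: "h (scaleC \<mu> x) = scaleC \<mu> (h x)" if mu: "\<mu> \<in> circle_arc n0" for \<mu> x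
  proof -
    let ?a = "2 *\<^sub>R (h (scaleC \<mu> x) - scaleC \<mu> (h x))"
    have "?a = 0"
    proof (rule vanish[OF _ assms(7,8)])
      fix n
      let ?s = "(2::real)^n"
      have eq: "h (scaleC \<mu> (?s *\<^sub>R x + of_int m *\<^sub>R 0)) + h (scaleC \<mu> (?s *\<^sub>R x - of_int m *\<^sub>R 0))
                 - scaleC \<mu> (2 *\<^sub>R h (?s *\<^sub>R x) - (2 * of_int m ^ 2) *\<^sub>R h 0
                               + (of_int m ^ 2) *\<^sub>R h (2 *\<^sub>R 0)) = ?s *\<^sub>R ?a"
        by (simp only: scaleR_zero_right add_0_right diff_zero h0 scaleC_scaleR_comm hpow)
           (simp add: algebra_simps scaleC_diff_right dbl)
      have "norm (?s *\<^sub>R ?a) \<le> \<theta> * (norm (?s *\<^sub>R x) powr p + norm (0::'a) powr q)"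
        unfolding eq[symmetric] by (rule A2[OF mu])
      then show "?s * norm ?a \<le> \<theta> * (?s powr p * norm x powr p + ?s powr q * norm (0::'a) powr q)"
        unfolding npw by simp
    qed
    then show ?thesis by simp
  qed
  have hpowC: "h (scaleC (\<mu>^k) x) = scaleC (\<mu>^k) (h x)" if mu: "\<mu> \<in> circle_arc n0" for \<mu> k x
  proof (induction k arbitrary: x)
    case 0 then show ?case by (simp add: scaleC_one)
  next
    case (Suc k)
    have "h (scaleC (\<mu>^Suc k) x) = h (scaleC \<mu> (scaleC (\<mu>^k) x))" by (simp add: scaleC_scaleC)
    also have "\<dots> = scaleC \<mu> (scaleC (\<mu>^k) (h x))" by (simp add: harc[OF mu] Suc)
    also have "\<dots> = scaleC (\<mu>^Suc k) (h x)" by (simp add: scaleC_scaleC)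
    finally show ?case .
  qed
  have hcis0: "h (scaleC (cis t) x) = scaleC (cis t) (h x)" if "0 \<le> t" "t \<le> 2*pi" for t x
  proof -
    have n0: "real n0 > 0" using assms(1) by simp
    have mu: "cis (t / real n0) \<in> circle_arc n0"
      unfolding circle_arc_def cis_conv_exp
    proof (rule CollectI, rule exI[of _ "t / real n0"], intro conjI)
      show "0 \<le> t / real n0" using that n0 by simp
      show "t / real n0 \<le> 2 * pi / real n0" using that n0 by (simp add: divide_right_mono)
    qed simp
    have tt: "real n0 * (t / real n0) = t" using n0 by simp
    have "cis (t / real n0) ^ n0 = cis (real n0 * (t / real n0))" by (rule Complex.DeMoivre)
    also have "\<dots> = cis t" by (simp only: tt)
    finally have "cis (t / real n0) ^ n0 = cis t" .
    then show ?thesis using hpowC[OF mu, of n0 x] by simp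
  qed
  have hcis: "h (scaleC (cis t) x) = scaleC (cis t) (h x)" if "-2*pi \<le> t" "t \<le> 2*pi" for t x
  proof (cases "0 \<le> t")
    case True then show ?thesis using hcis0 that by simp
  next
    case False
    have eq: "cis t = cis (t + 2*pi)" using cis_mult[of t "2*pi"] by simp
    have "0 \<le> t + 2*pi" "t + 2*pi \<le> 2*pi" using that False by linarith+
    from hcis0[OF this, of x] show ?thesis by (simp only: eq)
  qed
  have hR2: "h (r *\<^sub>R x) = r *\<^sub>R h x" if r: "\<bar>r\<bar> \<le> 2" for r x
  proof -
    define t where "t = arccos (r/2)"
    have t: "0 \<le> t" "t \<le> pi" "2 * cos t = r" using r unfolding t_def
      by (auto intro: arccos_lbound arccos_ubound)
    have cc: "cis t + cis (-t) = complex_of_real r" using cis_plus_minus[of t] t by simp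
    have "h (r *\<^sub>R x) = h (scaleC (cis t) x + scaleC (cis (-t)) x)"
      by (simp add: scaleC_add_left[symmetric] cc scaleC_of_real)
    also have "\<dots> = scaleC (cis t) (h x) + scaleC (cis (-t)) (h x)"
      using t by (simp add: hadd hcis)
    also have "\<dots> = r *\<^sub>R h x"
      by (simp add: scaleC_add_left[symmetric] cc scaleC_of_real)
    finally show ?thesis .
  qed
  have hR: "h (r *\<^sub>R x) = r *\<^sub>R h x" for r x
  proof -
    define N where "N = nat \<lceil>\<bar>r\<bar>\<rceil> + 1"
    have c0: "0 \<le> \<lceil>\<bar>r\<bar>\<rceil>" by simp
    have "real (nat \<lceil>\<bar>r\<bar>\<rceil>) = real_of_int \<lceil>\<bar>r\<bar>\<rceil>" using c0 by (rule of_nat_nat)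
    moreover have "\<bar>r\<bar> \<le> real_of_int \<lceil>\<bar>r\<bar>\<rceil>" by (rule le_of_int_ceiling)
    ultimately have N: "real N > \<bar>r\<bar>" unfolding N_def of_nat_add of_nat_1 by linarith
    then have Np: "real N > 0" by linarith
    have ab: "\<bar>r / real N\<bar> = \<bar>r\<bar> / real N" using Np by (simp add: abs_divide)
    have "\<bar>r\<bar> / real N < 1" using N Np by (simp add: divide_less_eq)
    then have rN: "\<bar>r / real N\<bar> \<le> 2" unfolding ab by linarith
    have nn: "real N * (r / real N) = r" using Np by simp
    have e: "r *\<^sub>R w = of_nat N *\<^sub>R ((r / real N) *\<^sub>R w)" for w :: 'a
      by (simp only: scaleR_scaleR nn)
    have "h (r *\<^sub>R x) = h (of_nat N *\<^sub>R ((r / real N) *\<^sub>R x))" by (subst e[of x]) (rule refl)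
    also have "\<dots> = of_nat N *\<^sub>R h ((r / real N) *\<^sub>R x)" by (rule hnat)
    also have "\<dots> = of_nat N *\<^sub>R ((r / real N) *\<^sub>R h x)" by (simp only: hR2[OF rN])
    also have "\<dots> = r *\<^sub>R h x" by (rule e[symmetric])
    finally show ?thesis .
  qed
  have hC: "h (scaleC c x) = scaleC c (h x)" for c x
  proof -
    have c: "c = complex_of_real (cmod c) * cis (Arg c)" using rcis_cmod_Arg[of c] by (simp add: rcis_def)
    have e: "scaleC c w = scaleC (cis (Arg c)) (cmod c *\<^sub>R w)" for w :: 'a
      by (subst c) (simp add: scaleC_scaleC scaleC_of_real[symmetric] mult.commute)
    have a: "- 2 * pi \<le> Arg c" "Arg c \<le> 2 * pi" using Arg_bounded[of c] pi_gt_zero by linarith+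
    show ?thesis unfolding e by (simp add: hcis[OF a] hR)
  qed
  show ?thesis unfolding linear_derivation_def using hadd hC hmul by blast
qed

end
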